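(* Let $K$ be an algebraically closed field of characteristic $0$, let $1\le t\le m\le n$, and let $V,W$ be $K$-vector spaces of dimensions $m,n$. Then there exist elements $x\in X_t(V,W)$ with each of the following combinations of small rank and rank: $\operatorname{sr}(x)=\operatorname{rank}x=0$; $\operatorname{sr}(x)=\operatorname{rank}x=1$; $\operatorname{sr}(x)=u$ and $\operatorname{rank}x=\binom{u+k-1}{u-1}$ for every $u\in\{2,\dots,t+1\}$ and every $k\in\{1,\dots,m-t\}$.
   Context: For $t\ge0$ let $\Lambda_t:\operatorname{Hom}_K(V,W)\to\operatorname{Hom}_K(\bigwedge^tV,\bigwedge^tW)$, $\Lambda_t(\phi)=\bigwedge^t\phi$. $X_t(V,W)$ is the Zariski closure of the image of $\Lambda_t$ in the affine space $\operatorname{Hom}_K(\bigwedge^tV,\bigwedge^tW)$. For $\psi\in\operatorname{Hom}_K(\bigwedge^tV,\bigwedge^tW)$, $\operatorname{rank}\psi$ is its rank as a linear map, and the small rank $\operatorname{sr}(\psi)$ is the maximum of the ranks of the restrictions of $\psi$ to the subspaces $\bigwedge^tU\subseteq\bigwedge^tV$, where $U$ ranges over all subspaces of $V$ of dimension $\le t+1$. *)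

theory Defs
  imports "HOL-Computational_Algebra.Polynomial" "HOL-Library.Function_Algebras"
    "Jordan_Normal_Form.Determinant"
begin

definition fscale :: "'a::field \<Rightarrow> ('b \<Rightarrow> 'a) \<Rightarrow> ('b \<Rightarrow> 'a)" where
  "fscale c f = (\<lambda>x. c * f x)"

interpretation fvs: vector_space "fscale :: 'a::field \<Rightarrow> ('b \<Rightarrow> 'a) \<Rightarrow> _"
  by unfold_locales (auto simp: fscale_def fun_eq_iff algebra_simps)

text \<open>V = K^m is represented as the functions nat => K vanishing outside {0..<m}.
  The t-subsets of {0..<d} index the standard basis of the t-th exterior power of K^d.\<close>

definition Kspace :: "nat \<Rightarrow> (nat \<Rightarrow> 'a::field) set" where
  "Kspace d = {v. \<forall>j\<ge>d. v j = 0}"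

definition tsubs :: "nat \<Rightarrow> nat \<Rightarrow> nat set set" where
  "tsubs d t = {S. S \<subseteq> {0..<d} \<and> card S = t}"

definition minor :: "nat \<Rightarrow> (nat \<Rightarrow> nat \<Rightarrow> 'a::comm_ring_1) \<Rightarrow> nat set \<Rightarrow> nat set \<Rightarrow> 'a" where
  "minor t A I J = det (mat t t (\<lambda>(a, b). A (sorted_list_of_set I ! a) (sorted_list_of_set J ! b)))"

text \<open>The affine space Hom(wedge^t V, wedge^t W), with V = K^m, W = K^n, in standard coordinates:
  psi (I, J) is the coefficient of e_I in psi(e_J).\<close>
definition HomSpace :: "nat \<Rightarrow> nat \<Rightarrow> nat \<Rightarrow> (nat set \<times> nat set \<Rightarrow> 'a::field) set" where
  "HomSpace t m n = {\<psi>. \<forall>I J. (I \<notin> tsubs n t \<or> J \<notin> tsubs m t) \<longrightarrow> \<psi> (I, J) = 0}"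

text \<open>Lambda_t(phi) = wedge^t phi, where phi : K^m -> K^n is given by its n x m matrix A.\<close>
definition Lambda :: "nat \<Rightarrow> nat \<Rightarrow> nat \<Rightarrow> (nat \<Rightarrow> nat \<Rightarrow> 'a::field) \<Rightarrow> (nat set \<times> nat set \<Rightarrow> 'a)" where
  "Lambda t m n A = (\<lambda>(I, J). if I \<in> tsubs n t \<and> J \<in> tsubs m t then minor t A I J else 0)"

inductive_set polyfun :: "(('i \<Rightarrow> 'a::comm_ring_1) \<Rightarrow> 'a) set" where
  const: "(\<lambda>x. c) \<in> polyfun"
| coord: "(\<lambda>x. x i) \<in> polyfun"
| add: "p \<in> polyfun \<Longrightarrow> q \<in> polyfun \<Longrightarrow> (\<lambda>x. p x + q x) \<in> polyfun"
| mult: "p \<in> polyfun \<Longrightarrow> q \<in> polyfun \<Longrightarrow> (\<lambda>x. p x * q x) \<in> polyfun"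

definition zariski_closure :: "('i \<Rightarrow> 'a::comm_ring_1) set \<Rightarrow> ('i \<Rightarrow> 'a) set \<Rightarrow> ('i \<Rightarrow> 'a) set" where
  "zariski_closure A S = {x \<in> A. \<forall>p\<in>polyfun. (\<forall>s\<in>S. p s = 0) \<longrightarrow> p x = 0}"

definition Xt :: "nat \<Rightarrow> nat \<Rightarrow> nat \<Rightarrow> (nat set \<times> nat set \<Rightarrow> 'a::field) set" where
  "Xt t m n = zariski_closure (HomSpace t m n) (range (Lambda t m n))"

definition lin :: "nat \<Rightarrow> nat \<Rightarrow> (nat set \<times> nat set \<Rightarrow> 'a::field) \<Rightarrow> (nat set \<Rightarrow> 'a) \<Rightarrow> (nat set \<Rightarrow> 'a)" where
  "lin t m \<psi> v = (\<lambda>I. \<Sum>J\<in>tsubs m t. \<psi> (I, J) * v J)"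

definition rank_hom :: "nat \<Rightarrow> nat \<Rightarrow> (nat set \<times> nat set \<Rightarrow> 'a::field) \<Rightarrow> nat" where
  "rank_hom t m \<psi> = fvs.dim (range (lin t m \<psi>))"

text \<open>Coordinates of u_0 wedge ... wedge u_(t-1) in wedge^t K^m.\<close>
definition wedge :: "nat \<Rightarrow> nat \<Rightarrow> (nat \<Rightarrow> nat \<Rightarrow> 'a::field) \<Rightarrow> (nat set \<Rightarrow> 'a)" where
  "wedge t m u = (\<lambda>J. if J \<in> tsubs m t then det (mat t t (\<lambda>(a, b). u b (sorted_list_of_set J ! a))) else 0)"

definition ext_pow :: "nat \<Rightarrow> nat \<Rightarrow> (nat \<Rightarrow> 'a::field) set \<Rightarrow> (nat set \<Rightarrow> 'a) set" where
  "ext_pow t m U = fvs.span {wedge t m u | u. \<forall>b<t. u b \<in> U}"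

definition small_rank :: "nat \<Rightarrow> nat \<Rightarrow> (nat set \<times> nat set \<Rightarrow> 'a::field) \<Rightarrow> nat" where
  "small_rank t m \<psi> = Max {fvs.dim (lin t m \<psi> ` ext_pow t m U) | U.
      fvs.subspace U \<and> U \<subseteq> Kspace m \<and> fvs.dim U \<le> t + 1}"

end

theory Submission
  imports Defs
begin


lemma det_pigeon:
  fixes f :: "nat \<times> nat \<Rightarrow> 'a::comm_ring_1"
  assumes Rw: "Rw \<subseteq> {0..<t}" and C: "finite C" "card C < card Rw"
    and z: "\<And>a c. a \<in> Rw \<Longrightarrow> c < t \<Longrightarrow> c \<notin> C \<Longrightarrow> f (a,c) = 0"
  shows "det (mat t t f) = 0"
proof -
  have "(\<Prod>i = 0..<t. mat t t f $$ (i, p i)) = 0" if p: "p permutes {0..<t}" for p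
  proof (cases "\<exists>a\<in>Rw. p a \<notin> C")
    case True
    then obtain a where a: "a \<in> Rw" "p a \<notin> C" by auto
    have "a < t" using a Rw by auto
    moreover have "p a < t" using p \<open>a < t\<close> by (meson atLeastLessThan_iff permutes_in_image zero_le)
    ultimately have "mat t t f $$ (a, p a) = 0" using z a by simp
    then show ?thesis using \<open>a < t\<close> by (intro prod_zero) auto
  next
    case False
    then have "p ` Rw \<subseteq> C" by auto
    moreover have "inj_on p Rw" using p using permutes_inj_on by blast
    ultimately have "card Rw \<le> card C" using C(1) by (metis card_image card_mono)
    then show ?thesis using C by simp
  qed
  then show ?thesis by (subst det_def'[of _ t]) auto
qed

lemma det_zero_row:
  fixes f :: "nat \<times> nat \<Rightarrow> 'a::comm_ring_1"
  assumes "a < t" "\<And>c. c < t \<Longrightarrow> f (a,c) = 0"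
  shows "det (mat t t f) = 0"
  by (rule det_pigeon[of "{a}" t "{}"]) (use assms in auto)



lemma prod_one_col:
  assumes p: "p permutes {0..<t}" and j: "j < (t::nat)"
  shows "(\<Prod>a = 0..<t. (if p a = j then h a else k a)) = h (Hilbert_Choice.inv p j) * (\<Prod>a \<in> {0..<t} - {Hilbert_Choice.inv p j}. k a)"
proof -
  have a0: "Hilbert_Choice.inv p j \<in> {0..<t}" using permutes_in_image[OF permutes_inv[OF p]] j by simp
  have pa0: "p (Hilbert_Choice.inv p j) = j" using p by (meson permutes_inverses(1))
  have "(\<Prod>a = 0..<t. (if p a = j then h a else k a)) =
     (if p (Hilbert_Choice.inv p j) = j then h (Hilbert_Choice.inv p j) else k (Hilbert_Choice.inv p j)) * (\<Prod>a \<in> {0..<t} - {Hilbert_Choice.inv p j}. (if p a = j then h a else k a))"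
    using a0 by (simp add: prod.remove)
  also have "(\<Prod>a \<in> {0..<t} - {Hilbert_Choice.inv p j}. (if p a = j then h a else k a)) = (\<Prod>a \<in> {0..<t} - {Hilbert_Choice.inv p j}. k a)"
  proof (rule prod.cong)
    fix a assume "a \<in> {0..<t} - {Hilbert_Choice.inv p j}"
    then have "p a \<noteq> j" using p by (metis DiffD2 insertI1 permutes_inverses(2))
    then show "(if p a = j then h a else k a) = k a" by simp
  qed simp
  finally show ?thesis using pa0 by simp
qed

lemma det_col_lin:
  fixes x y :: "nat \<Rightarrow> 'a::comm_ring_1"
  assumes j: "j < t"
  shows "det (mat t t (\<lambda>(a,b). if b = j then c * x a + y a else g a b)) =
     c * det (mat t t (\<lambda>(a,b). if b = j then x a else g a b)) + det (mat t t (\<lambda>(a,b). if b = j then y a else g a b))"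
proof -
  have gen: "det (mat t t (\<lambda>(a,b). if b = j then z a else g a b)) =
     (\<Sum>p\<in>{p. p permutes {0..<t}}. signof p * (z (Hilbert_Choice.inv p j) * (\<Prod>a \<in> {0..<t} - {Hilbert_Choice.inv p j}. g a (p a))))" for z
  proof -
    have "det (mat t t (\<lambda>(a,b). if b = j then z a else g a b)) =
      (\<Sum>p\<in>{p. p permutes {0..<t}}. signof p * (\<Prod>a = 0..<t. mat t t (\<lambda>(a,b). if b = j then z a else g a b) $$ (a, p a)))"
      by (rule det_def') auto
    also have "\<dots> = (\<Sum>p\<in>{p. p permutes {0..<t}}. signof p * (\<Prod>a = 0..<t. (if p a = j then z a else g a (p a))))"
    proof (rule sum.cong[OF refl])
      fix p assume "p \<in> {p. p permutes {0..<t}}"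
      then have p: "p permutes {0..<t}" by simp
      have "(\<Prod>a = 0..<t. mat t t (\<lambda>(a,b). if b = j then z a else g a b) $$ (a, p a)) = (\<Prod>a = 0..<t. (if p a = j then z a else g a (p a)))"
      proof (rule prod.cong[OF refl])
        fix a assume "a \<in> {0..<t}"
        then have "a < t" "p a < t" using p by (auto simp: permutes_in_image)
        then show "mat t t (\<lambda>(a,b). if b = j then z a else g a b) $$ (a, p a) = (if p a = j then z a else g a (p a))" by simp
      qed
      then show "signof p * (\<Prod>a = 0..<t. mat t t (\<lambda>(a,b). if b = j then z a else g a b) $$ (a, p a)) = signof p * (\<Prod>a = 0..<t. (if p a = j then z a else g a (p a)))" by simp
    qed
    also have "\<dots> = (\<Sum>p\<in>{p. p permutes {0..<t}}. signof p * (z (Hilbert_Choice.inv p j) * (\<Prod>a \<in> {0..<t} - {Hilbert_Choice.inv p j}. g a (p a))))"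
      by (rule sum.cong[OF refl]) (simp add: prod_one_col[OF _ j])
    finally show ?thesis .
  qed
  show ?thesis unfolding gen
    by (simp add: sum_distrib_left sum.distrib[symmetric] algebra_simps)
qed



lemma wedge_col_lin:
  assumes j: "j < t"
  shows "wedge t m (u(j := (\<lambda>x. c * v x + w x))) = (\<lambda>J. c * wedge t m (u(j:=v)) J + wedge t m (u(j:=w)) J)"
proof
  fix J
  have e: "mat t t (\<lambda>(a,b). (u(j := z)) b (sorted_list_of_set J ! a)) =
           mat t t (\<lambda>(a,b). if b = j then z (sorted_list_of_set J ! a) else u b (sorted_list_of_set J ! a))" for z
    by (rule arg_cong[where f="mat t t"]) (auto simp: fun_eq_iff)
  show "wedge t m (u(j := (\<lambda>x. c * v x + w x))) J = c * wedge t m (u(j:=v)) J + wedge t m (u(j:=w)) J"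
    unfolding wedge_def e using det_col_lin[OF j, of c "\<lambda>a. v (sorted_list_of_set J ! a)" "\<lambda>a. w (sorted_list_of_set J ! a)"]
    by simp
qed

lemma wedge_span:
  assumes S: "fvs.subspace S"
    and base: "\<And>u. (\<forall>b<t. u b \<in> B) \<Longrightarrow> wedge t m u \<in> S"
    and u: "\<forall>b<t. u b \<in> fvs.span B"
  shows "wedge t m u \<in> S"
proof -
  have S0: "0 \<in> S" and Sadd: "\<And>x y. x \<in> S \<Longrightarrow> y \<in> S \<Longrightarrow> x + y \<in> S"
    and Sscale: "\<And>c x. x \<in> S \<Longrightarrow> fscale c x \<in> S"
    using S unfolding fvs.subspace_def by auto
  have "j \<le> t \<Longrightarrow> (\<forall>u. (\<forall>b<t. (b < j \<longrightarrow> u b \<in> fvs.span B) \<and> (j \<le> b \<longrightarrow> u b \<in> B)) \<longrightarrow> wedge t m u \<in> S)" for j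
  proof (induction j)
    case 0
    then show ?case using base by auto
  next
    case (Suc j)
    show ?case
    proof (intro allI impI)
      fix u assume hu: "\<forall>b<t. (b < Suc j \<longrightarrow> u b \<in> fvs.span B) \<and> (Suc j \<le> b \<longrightarrow> u b \<in> B)"
      have jt: "j < t" using Suc by simp
      define A where "A = {v. wedge t m (u(j:=v)) \<in> S}"
      have BA: "B \<subseteq> A"
      proof
        fix v assume "v \<in> B"
        then have "\<forall>b<t. (b < j \<longrightarrow> (u(j:=v)) b \<in> fvs.span B) \<and> (j \<le> b \<longrightarrow> (u(j:=v)) b \<in> B)"
          using hu by auto
        then show "v \<in> A" using Suc.IH Suc.prems unfolding A_def by simp
      qed
      have lin: "wedge t m (u(j := (\<lambda>x. c * v x + w x))) = (\<lambda>J. c * wedge t m (u(j:=v)) J + wedge t m (u(j:=w)) J)" for c v w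
        by (rule wedge_col_lin[OF jt])
      have z: "wedge t m (u(j := 0)) = 0"
      proof -
        have "wedge t m (u(j := (\<lambda>x. 1 * (0::nat\<Rightarrow>'a) x + 0 x))) = (\<lambda>J. 1 * wedge t m (u(j:=0)) J + wedge t m (u(j:=0)) J)"
          by (rule lin)
        then have "\<And>J. wedge t m (u(j := 0)) J = wedge t m (u(j := 0)) J + wedge t m (u(j := 0)) J"
          by (simp add: fun_eq_iff zero_fun_def) (metis)
        then have "\<And>J. wedge t m (u(j := 0)) J = 0" by (simp only: add_cancel_right_right)
        then show ?thesis by (simp add: fun_eq_iff)
      qed
      have "fvs.subspace A"
        unfolding fvs.subspace_def
      proof (intro conjI ballI allI)
        show "0 \<in> A" using z S0 unfolding A_def by simp
      next
        fix x y assume "x \<in> A" "y \<in> A"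
        then have "(\<lambda>J. 1 * wedge t m (u(j:=x)) J + wedge t m (u(j:=y)) J) \<in> S"
          using Sadd unfolding A_def by (simp add: plus_fun_def)
        then show "x + y \<in> A" unfolding A_def using lin[of 1 x y] by (simp add: plus_fun_def)
      next
        fix c x assume "x \<in> A"
        then have "(\<lambda>J. c * wedge t m (u(j:=x)) J + wedge t m (u(j:=0)) J) \<in> S"
          using Sscale unfolding A_def z by (simp add: fscale_def)
        then show "fscale c x \<in> A" unfolding A_def using lin[of c x 0] by (simp add: fscale_def)
      qed
      then have "fvs.span B \<subseteq> A" using BA by (rule fvs.span_minimal[rotated])
      moreover have "u j \<in> fvs.span B" using hu jt by simp
      ultimately show "wedge t m u \<in> S" unfolding A_def by auto
    qed
  qed
  from this[of t] u show ?thesis by auto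
qed



lemma sorted_prefix:
  assumes "finite I" "{0..<r} \<subseteq> I" "a < r"
  shows "sorted_list_of_set I ! a = a"
proof -
  have "sorted_list_of_set I = [0..<r] @ sorted_list_of_set (I - {0..<r})"
  proof (subst sorted_list_of_set_unique[symmetric])
    show "finite I" by fact
    have "r \<le> card I" using card_mono[OF assms(1,2)] by simp
    then have c: "card I = r + card (I - {0..<r})" using assms card_Diff_subset[of "{0..<r}" I]
      by simp
    show "sorted_wrt (<) ([0..<r] @ sorted_list_of_set (I - {0..<r})) \<and>
      set ([0..<r] @ sorted_list_of_set (I - {0..<r})) = I \<and>
      length ([0..<r] @ sorted_list_of_set (I - {0..<r})) = card I"
      using assms c by (auto simp: sorted_wrt_append strict_sorted_list_of_set)
  qed
  then show ?thesis using assms by (simp add: nth_append)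
qed

lemma wedge_cong: "(\<And>b. b < t \<Longrightarrow> u b = v b) \<Longrightarrow> wedge t m u = wedge t m v"
  unfolding wedge_def by (intro ext if_cong refl arg_cong[where f=det]) (auto intro!: eq_matI)

lemma wedge_noninj:
  assumes "b1 < t" "b2 < t" "b1 \<noteq> b2" "u b1 = u b2"
  shows "wedge t m u = 0"
proof
  fix J
  have "det (mat t t (\<lambda>(a, b). u b (sorted_list_of_set J ! a))) = 0"
    by (rule det_identical_columns[of _ t b1 b2]) (use assms in \<open>auto intro!: eq_vecI\<close>)
  then show "wedge t m u J = 0 J" unfolding wedge_def by simp
qed

lemma wedge_perm:
  assumes p: "p permutes {0..<t}"
  shows "wedge t m (u \<circ> p) = fscale (signof p) (wedge t m u)"
proof
  fix J
  let ?A = "mat t t (\<lambda>(a, b). u b (sorted_list_of_set J ! a))"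
  let ?B = "mat t t (\<lambda>(a, b). (u \<circ> p) b (sorted_list_of_set J ! a))"
  have "det ?B = det (transpose_mat ?B)" using det_transpose[of ?B t] by simp
  also have "transpose_mat ?B = mat t t (\<lambda>(i,j). (transpose_mat ?A) $$ (p i, j))"
    using p by (auto intro!: eq_matI simp: permutes_in_image)
  also have "det \<dots> = signof p * det (transpose_mat ?A)"
    by (rule det_permute_rows[OF _ p]) simp
  also have "det (transpose_mat ?A) = det ?A" using det_transpose[of ?A t] by simp
  finally show "wedge t m (u \<circ> p) J = fscale (signof p) (wedge t m u) J"
    unfolding wedge_def fscale_def by simp
qed

lemma wedge_same_image:
  assumes u: "inj_on u {0..<t}" and w: "inj_on w {0..<t}" and im: "u ` {0..<t} = w ` {0..<t}"
  shows "\<exists>p. p permutes {0..<t} \<and> wedge t m u = fscale (signof p) (wedge t m w)"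
proof -
  define p where "p b = (if b < t then the_inv_into {0..<t} w (u b) else b)" for b
  have bu: "bij_betw u {0..<t} (w ` {0..<t})" using u im by (simp add: bij_betw_def)
  have bw: "bij_betw (the_inv_into {0..<t} w) (w ` {0..<t}) {0..<t}"
    using w by (simp add: bij_betw_the_inv_into inj_on_imp_bij_betw)
  have "bij_betw (the_inv_into {0..<t} w \<circ> u) {0..<t} {0..<t}" using bu bw by (rule bij_betw_trans)
  then have "bij_betw p {0..<t} {0..<t}" by (rule bij_betw_cong[THEN iffD1, rotated]) (simp add: p_def)
  then have pp: "p permutes {0..<t}" by (rule bij_imp_permutes) (simp add: p_def)
  have "u b = (w \<circ> p) b" if "b < t" for b
  proof -
    have "u b \<in> w ` {0..<t}" using im that by auto
    then show ?thesis using that w by (simp add: p_def f_the_inv_into_f)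
  qed
  then have "wedge t m u = wedge t m (w \<circ> p)" by (rule wedge_cong)
  with wedge_perm[OF pp] pp show ?thesis by auto
qed



definition ee :: "nat \<Rightarrow> nat \<Rightarrow> 'a::field" where "ee i = (\<lambda>x. if x = i then 1 else 0)"

definition prj :: "nat \<Rightarrow> (nat \<Rightarrow> 'a::field) \<Rightarrow> (nat \<Rightarrow> 'a)" where
  "prj r v = (\<lambda>x. if x < r then v x else 0)"

lemma fun_sum_apply: "(\<Sum>i\<in>A. (f i :: 'b \<Rightarrow> 'c::comm_monoid_add)) x = (\<Sum>i\<in>A. f i x)"
  by (induction A rule: infinite_finite_induct) auto

lemma Kspace_span: "Kspace m \<subseteq> fvs.span (ee ` {0..<m} :: (nat \<Rightarrow> 'a::field) set)"
proof
  fix v :: "nat \<Rightarrow> 'a" assume v: "v \<in> Kspace m"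
  have "v = (\<Sum>i\<in>{0..<m}. fscale (v i) (ee i))"
  proof
    fix x
    have "(\<Sum>i\<in>{0..<m}. fscale (v i) (ee i)) x = (\<Sum>i\<in>{0..<m}. if x = i then v i else 0)"
      unfolding fun_sum_apply fscale_def ee_def by (rule sum.cong) auto
    also have "\<dots> = v x" using v by (simp add: Kspace_def)
    finally show "v x = (\<Sum>i\<in>{0..<m}. fscale (v i) (ee i)) x" by simp
  qed
  also have "\<dots> \<in> fvs.span (ee ` {0..<m})"
    by (intro fvs.span_sum fvs.span_scale fvs.span_base) auto
  finally show "v \<in> fvs.span (ee ` {0..<m})" .
qed

lemma Kspace_subspace: "fvs.subspace (Kspace m)"
  unfolding fvs.subspace_def Kspace_def by (auto simp: fscale_def)

lemma prj_linear: "Vector_Spaces.linear fscale fscale (prj r)"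
  by unfold_locales (auto simp: prj_def fscale_def fun_eq_iff)

lemma card_B1:
  fixes B B0 U :: "(nat \<Rightarrow> 'a::field) set"
  assumes B: "fvs.independent B" "finite B" "B0 \<subseteq> B" "B \<subseteq> U" and U: "fvs.subspace U"
    and W0: "\<And>v. v \<in> U \<Longrightarrow> prj r v = 0 \<Longrightarrow> v \<in> fvs.span B0"
  shows "card (B - B0) \<le> r"
proof -
  let ?B1 = "B - B0"
  have fin: "finite B0" "finite ?B1" using B finite_subset by auto
  have disj: "x = 0" if x1: "x \<in> fvs.span ?B1" and x0: "x \<in> fvs.span B0" for x
  proof -
    obtain c where c: "x = (\<Sum>v\<in>?B1. fscale (c v) v)" using x1 fvs.span_finite[OF fin(2)] by auto
    obtain d where d: "x = (\<Sum>v\<in>B0. fscale (d v) v)" using x0 fvs.span_finite[OF fin(1)] by auto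
    define h where "h v = (if v \<in> ?B1 then c v else - d v)" for v
    have "(\<Sum>v\<in>B. fscale (h v) v) = (\<Sum>v\<in>?B1. fscale (h v) v) + (\<Sum>v\<in>B0. fscale (h v) v)"
    proof -
      have "B = ?B1 \<union> B0" using B(3) by auto
      then have "(\<Sum>v\<in>B. fscale (h v) v) = (\<Sum>v\<in>?B1 \<union> B0. fscale (h v) v)" by simp
      also have "\<dots> = (\<Sum>v\<in>?B1. fscale (h v) v) + (\<Sum>v\<in>B0. fscale (h v) v)"
        by (rule sum.union_disjoint) (use fin in auto)
      finally show ?thesis .
    qed
    also have "(\<Sum>v\<in>?B1. fscale (h v) v) = x" unfolding c h_def by (rule sum.cong) auto
    also have "(\<Sum>v\<in>B0. fscale (h v) v) = - x" unfolding d h_def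
      by (simp add: sum_negf[symmetric] fscale_def fun_eq_iff fun_sum_apply)
    finally have "(\<Sum>v\<in>B. fscale (h v) v) = 0" by (simp add: zero_fun_def)
    then have "\<forall>v\<in>?B1. h v = 0" using fvs.independentD[OF B(1) B(2) order_refl] by blast
    then have "\<forall>v\<in>?B1. c v = 0" unfolding h_def by auto
    then have "(\<Sum>v\<in>?B1. fscale (c v) v) = 0" by (intro sum.neutral) (auto simp: fscale_def zero_fun_def)
    then show ?thesis using c by simp
  qed
  have spU: "fvs.span ?B1 \<subseteq> U" using B U by (intro fvs.span_minimal) auto
  have inj: "inj_on (prj r) (fvs.span ?B1)"
  proof (rule inj_onI)
    fix x y assume xy: "x \<in> fvs.span ?B1" "y \<in> fvs.span ?B1" "prj r x = prj r y"
    have "x - y \<in> fvs.span ?B1" using xy by (simp add: fvs.span_diff)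
    moreover have "prj r (x - y) = 0"
    proof (rule ext)
      fix z show "prj r (x - y) z = 0 z" using fun_cong[OF xy(3), of z] by (cases "z < r") (auto simp: prj_def fun_diff_def)
    qed
    ultimately have "x - y \<in> fvs.span B0" using W0 spU by auto
    then have "x - y = 0" using disj \<open>x - y \<in> fvs.span ?B1\<close> by blast
    then show "x = y" by simp
  qed
  have ind1: "fvs.independent ?B1" using fvs.independent_mono[OF B(1)] by blast
  have ind: "fvs.independent (prj r ` ?B1)"
  proof -
    interpret pl: Vector_Spaces.linear fscale fscale "prj r" by (rule prj_linear)
    show ?thesis by (rule pl.independent_injective_image[OF ind1 inj])
  qed
  have "prj r ` ?B1 \<subseteq> fvs.span (ee ` {0..<r})"
    using Kspace_span[of r] by (auto simp: Kspace_def prj_def)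
  then have "card (prj r ` ?B1) \<le> card (ee ` {0..<r} :: (nat \<Rightarrow> 'a) set)"
    using fvs.independent_span_bound[OF _ ind] by auto
  also have "\<dots> \<le> r" using card_image_le[of "{0..<r}" ee] by simp
  finally show ?thesis
    using card_image[OF inj_on_subset[OF inj fvs.span_superset]] by simp
qed



definition PD :: "nat set set \<Rightarrow> (nat set \<Rightarrow> 'a::field) \<Rightarrow> (nat set \<Rightarrow> 'a)" where
  "PD D f = (\<lambda>I. if I \<in> D then f I else 0)"

lemma choose_le_aux: "x \<le> Suc y \<Longrightarrow> x choose y \<le> Suc y"
proof -
  assume "x \<le> Suc y"
  then consider "x = Suc y" | "x = y" | "x < y" by linarith
  then show ?thesis by cases (auto simp: binomial_eq_0)
qed

lemma count_T:
  assumes B: "finite B" "B0 \<subseteq> B" "card (B - B0) \<le> r" "card B \<le> t + 1" "r \<le> t"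
  shows "card {T. T \<subseteq> B \<and> card T = t \<and> r \<le> card (T \<inter> (B - B0))} \<le> t + 1 - r"
proof -
  let ?B1 = "B - B0"
  let ?T = "{T. T \<subseteq> B \<and> card T = t \<and> r \<le> card (T \<inter> (B - B0))}"
  show ?thesis
  proof (cases "?T = {}")
    case True then show ?thesis by (simp only: card.empty)
  next
    case False
    then obtain T0 where "T0 \<in> ?T" by blast
    then have "r \<le> card (T0 \<inter> ?B1)" by auto
    also have "\<dots> \<le> card ?B1" using B by (intro card_mono) auto
    finally have cB1: "card ?B1 = r" using B by simp
    have fB1: "finite ?B1" using B by auto
    have T1: "T \<inter> ?B1 = ?B1" if "T \<in> ?T" for T
      using that cB1 fB1 card_mono[OF fB1, of "T \<inter> ?B1"] by (intro card_subset_eq) auto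
    have cB0: "card B0 = card B - r" using B cB1 card_Diff_subset[of B0 B] finite_subset[of B0 B] card_mono[of B B0]
      by auto
    have inj: "inj_on (\<lambda>T. T \<inter> B0) ?T"
    proof (rule inj_onI)
      fix T T' assume a: "T \<in> ?T" "T' \<in> ?T" "T \<inter> B0 = T' \<inter> B0"
      have "T = (T \<inter> ?B1) \<union> (T \<inter> B0)" "T' = (T' \<inter> ?B1) \<union> (T' \<inter> B0)" using a(1,2) by auto
      then show "T = T'" using T1[OF a(1)] T1[OF a(2)] a(3) by simp
    qed
    have im: "(\<lambda>T. T \<inter> B0) ` ?T \<subseteq> {S. S \<subseteq> B0 \<and> card S = t - r}"
    proof
      fix S assume "S \<in> (\<lambda>T. T \<inter> B0) ` ?T"
      then obtain T where TT: "T \<in> ?T" and ST: "S = T \<inter> B0" by blast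
      then have T: "T \<subseteq> B" "card T = t" "r \<le> card (T \<inter> ?B1)" by auto
      have "T \<inter> ?B1 = ?B1" using T1[OF TT] .
      then have "T = ?B1 \<union> (T \<inter> B0)" using T by auto
      moreover have "card (?B1 \<union> (T \<inter> B0)) = card ?B1 + card (T \<inter> B0)"
        by (rule card_Un_disjoint) (use fB1 B in \<open>auto intro: finite_subset\<close>)
      ultimately have "card T = card ?B1 + card (T \<inter> B0)" by simp
      then show "S \<in> {S. S \<subseteq> B0 \<and> card S = t - r}" using T cB1 ST by simp
    qed
    have "card ?T = card ((\<lambda>T. T \<inter> B0) ` ?T)" using card_image[OF inj] by simp
    also have "\<dots> \<le> card {S. S \<subseteq> B0 \<and> card S = t - r}"
    proof (rule card_mono[OF _ im])
      have "finite (Pow B0)" using B finite_subset by auto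
      then show "finite {S. S \<subseteq> B0 \<and> card S = t - r}" by (rule rev_finite_subset) auto
    qed
    also have "\<dots> = card B0 choose (t - r)" using B by (intro n_subsets) (auto intro: finite_subset)
    also have "\<dots> \<le> Suc (t - r)" using cB0 B by (intro choose_le_aux) simp
    finally show ?thesis using B by simp
  qed
qed



lemma PD_subspace: "fvs.subspace {f. PD D f \<in> fvs.span V}"
  unfolding fvs.subspace_def
proof (intro conjI ballI allI)
  show "0 \<in> {f. PD D f \<in> fvs.span V}"
    using fvs.span_zero by (simp add: PD_def zero_fun_def)
next
  fix x y assume "x \<in> {f. PD D f \<in> fvs.span V}" "y \<in> {f. PD D f \<in> fvs.span V}"
  then have "PD D x + PD D y \<in> fvs.span V" by (simp add: fvs.span_add)
  moreover have "PD D x + PD D y = PD D (x + y)" by (auto simp: PD_def fun_eq_iff)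
  ultimately show "x + y \<in> {f. PD D f \<in> fvs.span V}" by simp
next
  fix c x assume "x \<in> {f. PD D f \<in> fvs.span V}"
  then have "fscale c (PD D x) \<in> fvs.span V" by (simp add: fvs.span_scale)
  moreover have "fscale c (PD D x) = PD D (fscale c x)" by (auto simp: PD_def fscale_def fun_eq_iff)
  ultimately show "fscale c x \<in> {f. PD D f \<in> fvs.span V}" by simp
qed

lemma upper_bound:
  fixes U :: "(nat \<Rightarrow> 'a::field) set"
  assumes U: "fvs.subspace U" "U \<subseteq> Kspace m" "fvs.dim U \<le> t + 1" and r: "r \<le> t"
    and D: "\<And>I. I \<in> D \<Longrightarrow> finite I \<and> {0..<r} \<subseteq> I"
  shows "fvs.dim (PD D ` ext_pow t m U) \<le> t + 1 - r"
proof -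
  define W0 where "W0 = {v\<in>U. prj r v = 0}"
  obtain B0 where B0: "B0 \<subseteq> W0" "fvs.independent B0" "W0 \<subseteq> fvs.span B0"
    by (rule fvs.basis_exists[of W0])
  have "B0 \<subseteq> U" using B0 unfolding W0_def by auto
  then obtain B where B: "B0 \<subseteq> B" "B \<subseteq> U" "fvs.independent B" "U \<subseteq> fvs.span B"
    using fvs.maximal_independent_subset_extend[of B0 U, OF _ B0(2)] by blast
  have "B \<subseteq> fvs.span (ee ` {0..<m})" using B U Kspace_span[of m] by blast
  then have finB: "finite B" using fvs.independent_span_bound[OF _ B(3)] by blast
  have cardB: "card B \<le> t + 1" using fvs.basis_card_eq_dim[OF B(2) B(4) B(3)] U by simp
  define B1 where "B1 = B - B0"
  have cB1: "card B1 \<le> r" unfolding B1_def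
    by (rule card_B1[OF B(3) finB B(1) B(2) U(1)]) (use B0 in \<open>auto simp: W0_def\<close>)
  define enum :: "(nat \<Rightarrow> 'a) set \<Rightarrow> nat \<Rightarrow> nat \<Rightarrow> 'a" where "enum T = (SOME h. bij_betw h {0..<t} T)" for T
  define TT where "TT = {T. T \<subseteq> B \<and> card T = t \<and> r \<le> card (T \<inter> B1)}"
  define V0 where "V0 = (\<lambda>T. PD D (wedge t m (enum T))) ` TT"
  have finTT: "finite TT"
  proof -
    have "finite (Pow B)" using finB by simp
    then show ?thesis unfolding TT_def by (rule rev_finite_subset) auto
  qed
  have cTT: "card TT \<le> t + 1 - r"
    unfolding TT_def B1_def by (rule count_T[OF finB B(1) cB1[unfolded B1_def] cardB r])
  have key: "wedge t m u \<in> {f. PD D f \<in> fvs.span V0}" if u: "\<forall>b<t. u b \<in> B" for u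
  proof (cases "inj_on u {0..<t}")
    case False
    then obtain b1 b2 where "b1 \<in> {0..<t}" "b2 \<in> {0..<t}" "b1 \<noteq> b2" "u b1 = u b2" unfolding inj_on_def by blast
    then have "b1 < t" "b2 < t" "b1 \<noteq> b2" "u b1 = u b2" by auto
    then have "wedge t m u = 0" by (rule wedge_noninj)
    then show ?thesis using fvs.span_zero by (simp add: PD_def zero_fun_def)
  next
    case True
    define T where "T = u ` {0..<t}"
    have cT: "card T = t" unfolding T_def using card_image[OF True] by simp
    have TB: "T \<subseteq> B" using u T_def by auto
    show ?thesis
    proof (cases "r \<le> card (T \<inter> B1)")
      case True
      have TT: "T \<in> TT" using True cT TB unfolding TT_def by auto
      have "finite T" using TB finB finite_subset by blast
      then have "\<exists>h. bij_betw h {0..<card T} T" by (rule ex_bij_betw_nat_finite)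
      then have "\<exists>h. bij_betw h {0..<t} T" using cT by simp
      then have bh: "bij_betw (enum T) {0..<t} T" unfolding enum_def by (rule someI_ex)
      then have i2: "inj_on (enum T) {0..<t}" and im: "enum T ` {0..<t} = T" unfolding bij_betw_def by blast+
      have im2: "u ` {0..<t} = enum T ` {0..<t}" using im T_def by simp
      obtain p where "wedge t m u = fscale (signof p) (wedge t m (enum T))"
        using wedge_same_image[OF \<open>inj_on u {0..<t}\<close> i2 im2, of m] by blast
      then have "PD D (wedge t m u) = fscale (signof p) (PD D (wedge t m (enum T)))"
        by (auto simp: PD_def fscale_def fun_eq_iff)
      moreover have "PD D (wedge t m (enum T)) \<in> fvs.span V0"
        using TT unfolding V0_def by (intro fvs.span_base) auto
      ultimately show ?thesis by (simp add: fvs.span_scale)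
    next
      case False
      have "PD D (wedge t m u) = 0"
      proof
        fix I
        show "PD D (wedge t m u) I = 0 I"
        proof (cases "I \<in> D")
          case False then show ?thesis by (simp add: PD_def)
        next
          case True
          have fI: "finite I" "{0..<r} \<subseteq> I" using D[OF True] by auto
          define C where "C = {c. c < t \<and> u c \<in> B1}"
          have Csub: "C \<subseteq> {0..<t}" unfolding C_def by auto
          have "inj_on u C" using inj_on_subset[OF \<open>inj_on u {0..<t}\<close> Csub] .
          moreover have "u ` C = T \<inter> B1" unfolding C_def T_def by auto
          ultimately have "bij_betw u C (T \<inter> B1)" unfolding bij_betw_def by blast
          then have "card C = card (T \<inter> B1)" by (rule bij_betw_same_card)
          then have cC: "card C < card {0..<r}" using False by simp
          have "det (mat t t (\<lambda>(a, b). u b (sorted_list_of_set I ! a))) = 0"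
          proof (rule det_pigeon[of "{0..<r}" t C])
            show "finite C" unfolding C_def by simp
            fix a c assume ac: "a \<in> {0..<r}" "c < t" "c \<notin> C"
            then have "u c \<in> B0" using u unfolding C_def B1_def by auto
            then have "prj r (u c) = 0" using B0 unfolding W0_def by auto
            then have "prj r (u c) a = 0" by simp
            then have "u c a = 0" using ac unfolding prj_def by simp
            then show "(case (a, c) of (a, b) \<Rightarrow> u b (sorted_list_of_set I ! a)) = 0"
              using sorted_prefix[OF fI, of a] ac by simp
          next
            show "{0..<r} \<subseteq> {0..<t}" using r by auto
          next
            show "card C < card {0..<r}" by (rule cC)
          qed
          then show ?thesis by (simp add: PD_def wedge_def)
        qed
      qed
      then show ?thesis using fvs.span_zero by simp
    qed
  qed
  have sub: "ext_pow t m U \<subseteq> {f. PD D f \<in> fvs.span V0}"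
    unfolding ext_pow_def
  proof (rule fvs.span_minimal[OF _ PD_subspace])
    show "{wedge t m u |u. \<forall>b<t. u b \<in> U} \<subseteq> {f. PD D f \<in> fvs.span V0}"
    proof clarify
      fix u assume "\<forall>b<t. u b \<in> U"
      then have "\<forall>b<t. u b \<in> fvs.span B" using B by auto
      then show "PD D (wedge t m u) \<in> fvs.span V0"
        using wedge_span[where B=B and u=u and t=t and m=m, OF PD_subspace] key by auto
    qed
  qed
  have "fvs.dim (PD D ` ext_pow t m U) \<le> card V0"
    by (rule fvs.dim_le_card) (use sub finTT V0_def in auto)
  also have "\<dots> \<le> card TT" unfolding V0_def by (rule card_image_le[OF finTT])
  finally show ?thesis using cTT by simp
qed



definition xD :: "nat set set \<Rightarrow> (nat set \<times> nat set \<Rightarrow> 'a::field)" where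
  "xD D = (\<lambda>(I,J). if I = J \<and> J \<in> D then 1 else 0)"

definition dlt :: "nat set \<Rightarrow> nat set \<Rightarrow> 'a::field" where
  "dlt T = (\<lambda>J. if J = T then 1 else 0)"

lemma finite_tsubs: "finite (tsubs m t)"
proof -
  have "finite (Pow {0..<m})" by simp
  then show ?thesis unfolding tsubs_def by (rule rev_finite_subset) auto
qed

lemma lin_xD: assumes "D \<subseteq> tsubs m t" shows "lin t m (xD D) = (PD D :: _ \<Rightarrow> nat set \<Rightarrow> 'a::field)"
proof (intro ext)
  fix v :: "nat set \<Rightarrow> 'a" and I
  have "lin t m (xD D) v I = (\<Sum>J\<in>tsubs m t. if J = I then (if I \<in> D then v I else 0) else 0)"
    unfolding lin_def xD_def by (rule sum.cong) auto
  also have "\<dots> = PD D v I" using assms finite_tsubs[of m t] by (auto simp: PD_def)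
  finally show "lin t m (xD D) v I = PD D v I" .
qed

lemma inj_dlt: "inj (dlt :: nat set \<Rightarrow> nat set \<Rightarrow> 'a::field)"
  by (rule injI) (auto simp: dlt_def fun_eq_iff split: if_splits)

lemma indep_dlt: assumes S: "finite S" shows "fvs.independent (dlt ` S :: (nat set \<Rightarrow> 'a::field) set)"
proof (rule fvs.independent_if_scalars_zero)
  fix f :: "(nat set \<Rightarrow> 'a) \<Rightarrow> 'a" and x :: "nat set \<Rightarrow> 'a"
  assume sum: "(\<Sum>x\<in>dlt ` S. fscale (f x) x) = 0" and x: "x \<in> dlt ` S"
  then obtain T where T: "T \<in> S" "x = dlt T" by auto
  have "0 = (\<Sum>y\<in>(dlt ` S :: (nat set \<Rightarrow> 'a) set). fscale (f y) y) T" using sum by (simp add: zero_fun_def)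
  also have "\<dots> = (\<Sum>y\<in>(dlt ` S :: (nat set \<Rightarrow> 'a) set). if y = x then f x else 0)"
    unfolding fun_sum_apply
  proof (rule sum.cong[OF refl])
    fix y :: "nat set \<Rightarrow> 'a" assume "y \<in> dlt ` S"
    then obtain T' where yT: "y = dlt T'" by auto
    show "fscale (f y) y T = (if y = x then f x else 0)"
    proof (cases "T' = T")
      case True then show ?thesis using yT T by (simp add: fscale_def dlt_def)
    next
      case False
      then have "y \<noteq> x" using yT T inj_dlt by (metis injD)
      then show ?thesis using yT False by (simp add: fscale_def dlt_def)
    qed
  qed
  also have "\<dots> = f x" using x S by simp
  finally show "f x = 0" by simp
qed (simp add: S)

lemma range_PD: assumes "finite D" shows "range (PD D) \<subseteq> fvs.span (dlt ` D :: (nat set \<Rightarrow> 'a::field) set)"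
proof clarify
  fix v :: "nat set \<Rightarrow> 'a"
  have "PD D v = (\<Sum>T\<in>D. fscale (v T) (dlt T))"
  proof
    fix I
    have "(\<Sum>T\<in>D. fscale (v T) (dlt T)) I = (\<Sum>T\<in>D. if I = T then v T else 0)"
      unfolding fun_sum_apply by (rule sum.cong) (auto simp: fscale_def dlt_def)
    then show "PD D v I = (\<Sum>T\<in>D. fscale (v T) (dlt T)) I" using assms by (simp add: PD_def)
  qed
  also have "\<dots> \<in> fvs.span (dlt ` D)" by (intro fvs.span_sum fvs.span_scale fvs.span_base) auto
  finally show "PD D v \<in> fvs.span (dlt ` D)" .
qed

lemma rank_xD: assumes "D \<subseteq> tsubs m t" shows "rank_hom t m (xD D :: _ \<Rightarrow> 'a::field) = card D"
proof -
  have fD: "finite D" using assms finite_tsubs finite_subset by blast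
  have "fvs.dim (range (PD D :: _ \<Rightarrow> nat set \<Rightarrow> 'a)) = card (dlt ` D :: (nat set \<Rightarrow> 'a) set)"
  proof (rule fvs.dim_unique)
    show "(dlt ` D :: (nat set \<Rightarrow> 'a) set) \<subseteq> range (PD D)"
    proof
      fix x assume "x \<in> (dlt ` D :: (nat set \<Rightarrow> 'a) set)"
      then obtain T where "T \<in> D" "x = dlt T" by auto
      then have "x = PD D x" by (auto simp: PD_def dlt_def fun_eq_iff)
      then show "x \<in> range (PD D)" by (metis rangeI)
    qed
  qed (use range_PD[OF fD] indep_dlt[OF fD] in auto)
  also have "\<dots> = card D" using card_image[OF inj_on_subset[OF inj_dlt]] by blast
  finally show ?thesis unfolding rank_hom_def lin_xD[OF assms] .
qed

lemma prod_list_upt: "prod_list (map f [0..<n]) = prod f {0..<n}"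
  by (induction n) auto

lemma wedge_ee:
  assumes T: "T \<in> tsubs m t"
  shows "wedge t m (\<lambda>b. ee (sorted_list_of_set T ! b)) = (dlt T :: _ \<Rightarrow> 'a::field)"
proof
  fix J :: "nat set"
  have fT: "finite T" "card T = t" using T unfolding tsubs_def by (auto intro: finite_subset)
  let ?Ts = "sorted_list_of_set T" and ?Js = "sorted_list_of_set J"
  show "wedge t m (\<lambda>b. ee (?Ts ! b)) J = (dlt T :: _ \<Rightarrow> 'a) J"
  proof (cases "J \<in> tsubs m t")
    case False then show ?thesis using T by (auto simp: wedge_def dlt_def)
  next
    case J: True
    have fJ: "finite J" "card J = t" using J unfolding tsubs_def by (auto intro: finite_subset)
    show ?thesis
    proof (cases "J = T")
      case True
      have "mat t t (\<lambda>(a, b). ee (?Ts ! b) (?Ts ! a) :: 'a) = 1\<^sub>m t"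
      proof (rule eq_matI)
        fix a b assume ab: "a < dim_row (1\<^sub>m t :: 'a mat)" "b < dim_col (1\<^sub>m t :: 'a mat)"
        then have "a < length ?Ts" "b < length ?Ts" using fT by auto
        then have "(?Ts ! a = ?Ts ! b) = (a = b)" by (simp add: nth_eq_iff_index_eq)
        then show "mat t t (\<lambda>(a, b). ee (?Ts ! b) (?Ts ! a) :: 'a) $$ (a, b) = 1\<^sub>m t $$ (a, b)"
          using ab by (auto simp: ee_def)
      qed auto
      then show ?thesis using True J by (simp add: wedge_def dlt_def)
    next
      case False
      have "\<not> J \<subseteq> T" using False fT fJ card_subset_eq by metis
      then obtain j where j: "j \<in> J" "j \<notin> T" by auto
      then obtain a where a: "a < length ?Js" "?Js ! a = j" using fJ by (metis in_set_conv_nth set_sorted_list_of_set)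
      have "det (mat t t (\<lambda>(a, b). ee (?Ts ! b) (?Js ! a) :: 'a)) = 0"
      proof (rule det_zero_row)
        show "a < t" using a fJ by simp
        fix c assume "c < t"
        then have "?Ts ! c \<in> T" using fT by (metis length_sorted_list_of_set nth_mem set_sorted_list_of_set)
        then show "(case (a, c) of (a, b) \<Rightarrow> ee (?Ts ! b) (?Js ! a)) = (0::'a)" using a j by (auto simp: ee_def)
      qed
      then show ?thesis using False J by (simp add: wedge_def dlt_def)
    qed
  qed
qed



lemma sr_xD:
  assumes r: "r \<le> t" and D: "D \<subseteq> tsubs m t" "\<And>I. I \<in> D \<Longrightarrow> {0..<r} \<subseteq> I"
    and q: "q \<le> m" "q \<le> t+1" and S: "SS \<subseteq> D" "\<And>T. T \<in> SS \<Longrightarrow> T \<subseteq> {0..<q}" "card SS = t+1-r"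
  shows "small_rank t m (xD D :: _ \<Rightarrow> 'a::field) = t+1-r"
proof -
  define F where "F U = fvs.dim (PD D ` ext_pow t m U :: (nat set \<Rightarrow> 'a) set)" for U :: "(nat \<Rightarrow> 'a) set"
  let ?P = "\<lambda>U :: (nat \<Rightarrow> 'a) set. fvs.subspace U \<and> U \<subseteq> Kspace m \<and> fvs.dim U \<le> t + 1"
  have X: "{fvs.dim (lin t m (xD D :: _ \<Rightarrow> 'a) ` ext_pow t m U) | U. ?P U} = {F U | U. ?P U}"
    unfolding F_def lin_xD[OF D(1)] ..
  have fD: "finite D" using D(1) finite_tsubs finite_subset by blast
  have up: "F U \<le> t+1-r" if "?P U" for U
    unfolding F_def
  proof (rule upper_bound[OF _ _ _ r])
    fix I assume "I \<in> D"
    then show "finite I \<and> {0..<r} \<subseteq> I" using D unfolding tsubs_def by (auto intro: finite_subset)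
  qed (use that in auto)
  define U0 where "U0 = fvs.span (ee ` {0..<q} :: (nat \<Rightarrow> 'a) set)"
  have PU0: "?P U0"
  proof (intro conjI)
    show "fvs.subspace U0" unfolding U0_def by simp
    show "U0 \<subseteq> Kspace m" unfolding U0_def
      by (rule fvs.span_minimal[OF _ Kspace_subspace]) (use q in \<open>auto simp: Kspace_def ee_def\<close>)
    have "fvs.dim U0 \<le> card (ee ` {0..<q} :: (nat \<Rightarrow> 'a) set)" unfolding U0_def fvs.dim_span
      by (rule fvs.dim_le_card') simp
    also have "\<dots> \<le> q" using card_image_le[of "{0..<q}" ee] by simp
    finally show "fvs.dim U0 \<le> t + 1" using q by simp
  qed
  have low: "t+1-r \<le> F U0"
  proof -
    let ?V = "PD D ` ext_pow t m U0 :: (nat set \<Rightarrow> 'a) set"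
    have sub: "dlt ` SS \<subseteq> ?V"
    proof
      fix x assume "x \<in> (dlt ` SS :: (nat set \<Rightarrow> 'a) set)"
      then obtain T where T: "T \<in> SS" "x = dlt T" by auto
      have TD: "T \<in> D" "T \<in> tsubs m t" using T S D by auto
      have fT: "finite T" "card T = t" using TD(2) unfolding tsubs_def by (auto intro: finite_subset)
      have "\<forall>b<t. ee (sorted_list_of_set T ! b) \<in> U0"
      proof (intro allI impI)
        fix b assume "b < t"
        then have "sorted_list_of_set T ! b \<in> T" using fT by (metis length_sorted_list_of_set nth_mem set_sorted_list_of_set)
        then have "sorted_list_of_set T ! b \<in> {0..<q}" using S T by blast
        then show "ee (sorted_list_of_set T ! b) \<in> U0" unfolding U0_def by (intro fvs.span_base) auto
      qed
      then have "wedge t m (\<lambda>b. ee (sorted_list_of_set T ! b)) \<in> ext_pow t m U0"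
        unfolding ext_pow_def by (intro fvs.span_base) blast
      then have "(dlt T :: nat set \<Rightarrow> 'a) \<in> ext_pow t m U0" by (simp only: wedge_ee[OF TD(2)])
      moreover have "PD D (dlt T) = (dlt T :: nat set \<Rightarrow> 'a)" using TD by (auto simp: PD_def dlt_def fun_eq_iff)
      ultimately show "x \<in> ?V" using T by (intro image_eqI[of x "PD D" "dlt T"]) auto
    qed
    have Vsp: "?V \<subseteq> fvs.span (dlt ` D)" using range_PD[OF fD] by auto
    obtain C where C: "C \<subseteq> ?V" "fvs.independent C" "?V \<subseteq> fvs.span C" "card C = fvs.dim ?V"
      by (rule fvs.basis_exists)
    have "C \<subseteq> fvs.span (dlt ` D)" using C(1) Vsp by blast
    then have fC: "finite C" using fvs.independent_span_bound[OF finite_imageI[OF fD] C(2)] by blast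
    have finS: "finite SS" using S(1) fD finite_subset by blast
    have "(dlt ` SS :: (nat set \<Rightarrow> 'a) set) \<subseteq> fvs.span C" using sub C(3) by blast
    then have "card (dlt ` SS :: (nat set \<Rightarrow> 'a) set) \<le> card C"
      using fvs.independent_span_bound[OF fC indep_dlt[OF finS]] by blast
    moreover have "card (dlt ` SS :: (nat set \<Rightarrow> 'a) set) = card SS"
      using card_image[OF inj_on_subset[OF inj_dlt]] by blast
    ultimately show ?thesis using C S unfolding F_def by simp
  qed
  have eq: "F U0 = t+1-r" using up[OF PU0] low by simp
  show ?thesis unfolding small_rank_def X
  proof (rule Max_eqI)
    show "finite {F U | U. ?P U}"
      by (rule finite_subset[of _ "{0..t+1-r}"]) (use up in auto)
    show "y \<le> t+1-r" if "y \<in> {F U | U. ?P U}" for y using that up by auto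
    have "F U0 \<in> {F U | U. ?P U}" using PU0 by blast
    then show "t+1-r \<in> {F U | U. ?P U}" using eq by simp
  qed
qed

lemma sr_zero: "small_rank t m (xD {} :: _ \<Rightarrow> 'a::field) = 0"
proof -
  have "lin t m (xD {} :: _ \<Rightarrow> 'a) = PD {}" by (rule lin_xD) simp
  then have l: "lin t m (xD {} :: _ \<Rightarrow> 'a) = (\<lambda>v. 0)" by (auto simp: PD_def fun_eq_iff)
  let ?P = "\<lambda>U :: (nat \<Rightarrow> 'a) set. fvs.subspace U \<and> U \<subseteq> Kspace m \<and> fvs.dim U \<le> t + 1"
  have z: "fvs.dim ((\<lambda>v. 0 :: nat set \<Rightarrow> 'a) ` X) = 0" for X :: "(nat set \<Rightarrow> 'a) set"
    using fvs.dim_le_card[of "(\<lambda>v. 0 :: nat set \<Rightarrow> 'a) ` X" "{}"] by auto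
  have "?P {0}"
    using fvs.dim_le_card[of "{0::nat\<Rightarrow>'a}" "{}"] by (auto simp: Kspace_def)
  then have "{fvs.dim (lin t m (xD {} :: _ \<Rightarrow> 'a) ` ext_pow t m U) | U. ?P U} = {0}"
    unfolding l z by blast
  then show ?thesis unfolding small_rank_def by simp
qed



lemma polyfun_curve:
  fixes \<gamma> :: "'b::field \<Rightarrow> ('i \<Rightarrow> 'b)"
  assumes "p \<in> polyfun" and g: "\<And>i. \<exists>q. \<forall>s. \<gamma> s i = poly q s"
  shows "\<exists>Q. \<forall>s. p (\<gamma> s) = poly Q s"
  using assms(1)
proof induction
  case (const c) then show ?case by (intro exI[of _ "[:c:]"]) simp
next
  case (coord i) then show ?case using g[of i] by simp
next
  case (add p q)
  then obtain P Q where "\<forall>s. p (\<gamma> s) = poly P s" "\<forall>s. q (\<gamma> s) = poly Q s" by blast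
  then show ?case by (intro exI[of _ "P + Q"]) simp
next
  case (mult p q)
  then obtain P Q where "\<forall>s. p (\<gamma> s) = poly P s" "\<forall>s. q (\<gamma> s) = poly Q s" by blast
  then show ?case by (intro exI[of _ "P * Q"]) simp
qed

lemma tsubs_card: "J \<in> tsubs m t \<Longrightarrow> finite J \<and> card J = t"
  unfolding tsubs_def by (auto intro: finite_subset)

lemma minor_diag:
  fixes d :: "nat \<Rightarrow> 'a::field"
  assumes I: "I \<in> tsubs n t" and J: "J \<in> tsubs m t"
  shows "minor t (\<lambda>i j. if i = j then d i else 0) I J = (if I = J then \<Prod>j\<in>J. d j else 0)"
proof -
  let ?Is = "sorted_list_of_set I" and ?Js = "sorted_list_of_set J"
  have fI: "finite I" "card I = t" and fJ: "finite J" "card J = t" using tsubs_card I J by auto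
  show ?thesis
  proof (cases "I = J")
    case True
    let ?A = "mat t t (\<lambda>(a, b). if ?Is ! a = ?Is ! b then d (?Is ! a) else 0)"
    have ut: "upper_triangular ?A"
    proof (rule upper_triangularI)
      fix i j assume ij: "j < i" "i < dim_row ?A"
      then have "i < length ?Is" "j < length ?Is" using fI by auto
      then have "?Is ! i \<noteq> ?Is ! j" using ij by (simp add: nth_eq_iff_index_eq)
      then show "?A $$ (i, j) = 0" using ij by simp
    qed
    have "det ?A = prod_list (diag_mat ?A)" by (rule det_upper_triangular[OF ut, of t]) simp
    also have "\<dots> = (\<Prod>a\<in>{0..<t}. d (?Is ! a))" unfolding diag_mat_def prod_list_upt by simp
    also have "\<dots> = (\<Prod>j\<in>I. d j)"
    proof (rule prod.reindex_bij_betw)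
      show "bij_betw ((!) ?Is) {0..<t} I" by (rule bij_betw_nth) (use fI in auto)
    qed
    finally show ?thesis unfolding minor_def using True by simp
  next
    case False
    have "\<not> I \<subseteq> J" using False fI fJ card_subset_eq by metis
    then obtain i where i: "i \<in> I" "i \<notin> J" by auto
    then obtain a where a: "a < length ?Is" "?Is ! a = i" using fI by (metis in_set_conv_nth set_sorted_list_of_set)
    have "det (mat t t (\<lambda>(a, b). if ?Is ! a = ?Js ! b then d (?Is ! a) else 0)) = 0"
    proof (rule det_zero_row)
      show "a < t" using a fI by simp
      fix c assume "c < t"
      then have "?Js ! c \<in> J" using fJ by (metis length_sorted_list_of_set nth_mem set_sorted_list_of_set)
      then show "(case (a, c) of (a, b) \<Rightarrow> if ?Is ! a = ?Js ! b then d (?Is ! a) else 0) = 0" using a i by auto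
    qed
    then show ?thesis unfolding minor_def using False by simp
  qed
qed



lemma closure_xD:
  fixes r l :: nat
  assumes t: "1 \<le> t" "r \<le> t" "r + l \<le> m" "m \<le> n"
  shows "xD {J \<in> tsubs m t. {0..<r} \<subseteq> J \<and> J \<subseteq> {0..<r+l}} \<in> (Xt t m n :: (_ \<Rightarrow> 'a::{alg_closed_field, field_char_0}) set)"
proof -
  define D where "D = {J \<in> tsubs m t. {0..<r} \<subseteq> J \<and> J \<subseteq> {0..<r+l}}"
  define D' where "D' = {J \<in> tsubs m t. J \<subseteq> {0..<r+l}}"
  define cJ where "cJ J = card (J \<inter> {0..<r})" for J :: "nat set"
  define \<gamma> :: "'a \<Rightarrow> nat set \<times> nat set \<Rightarrow> 'a" where
    "\<gamma> s = (\<lambda>(I,J). if I = J \<and> J \<in> D' then s ^ (r - cJ J) else 0)" for s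
  have tmn: "tsubs m t \<subseteq> tsubs n t" using t unfolding tsubs_def by auto
  have cJr: "cJ J \<le> r" for J unfolding cJ_def using card_mono[of "{0..<r}" "J \<inter> {0..<r}"] by simp
  have cJeq: "cJ J = r \<longleftrightarrow> {0..<r} \<subseteq> J" for J
  proof
    assume "cJ J = r"
    then have "J \<inter> {0..<r} = {0..<r}" unfolding cJ_def by (intro card_subset_eq) auto
    then show "{0..<r} \<subseteq> J" by auto
  next
    assume "{0..<r} \<subseteq> J"
    then have "J \<inter> {0..<r} = {0..<r}" by auto
    then show "cJ J = r" unfolding cJ_def by simp
  qed
  have g0: "\<gamma> 0 = xD D"
  proof (rule ext, clarify)
    fix I J :: "nat set"
    show "\<gamma> 0 (I, J) = xD D (I, J)"
      using cJr[of J] cJeq[of J] by (auto simp: \<gamma>_def xD_def D_def D'_def)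
  qed
  have hom: "xD D \<in> HomSpace t m n"
    unfolding HomSpace_def xD_def D_def using tmn by auto
  have grange: "\<gamma> s \<in> range (Lambda t m n)" if s: "s \<noteq> 0" for s
  proof -
    obtain \<mu> :: 'a where mu: "\<mu> ^ t = inverse s ^ (t - r)" using nth_root_exists[of t] t by auto
    define d where "d i = (if i < r + l then (if i < r then \<mu> else \<mu> * s) else 0)" for i
    define A where "A = (\<lambda>i j. if i = j then d i else 0)"
    have "Lambda t m n A = \<gamma> s"
    proof (rule ext, clarify)
      fix I J :: "nat set"
      show "Lambda t m n A (I, J) = \<gamma> s (I, J)"
      proof (cases "I \<in> tsubs n t \<and> J \<in> tsubs m t")
        case False
        then show ?thesis using tmn by (auto simp: Lambda_def \<gamma>_def D'_def)
      next
        case True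
        then have mI: "minor t A I J = (if I = J then \<Prod>j\<in>J. d j else 0)"
          unfolding A_def by (intro minor_diag) auto
        show ?thesis
        proof (cases "I = J")
          case False then show ?thesis using True mI by (simp add: Lambda_def \<gamma>_def)
        next
          case IJ: True
          have fJ: "finite J" "card J = t" using tsubs_card True by auto
          show ?thesis
          proof (cases "J \<subseteq> {0..<r+l}")
            case False
            then obtain j where j: "j \<in> J" "\<not> j < r + l" unfolding subset_iff atLeastLessThan_iff by auto
            have "(\<Prod>j\<in>J. d j) = 0" using j fJ by (intro prod_zero bexI[of _ j]) (auto simp: d_def)
            then show ?thesis using True mI IJ False by (simp add: Lambda_def \<gamma>_def D'_def)
          next
            case sub: True
            have "(\<Prod>j\<in>J. d j) = (\<Prod>j\<in>J. if j < r then \<mu> else \<mu> * s)"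
              using sub by (intro prod.cong) (auto simp: d_def)
            also have "\<dots> = (\<Prod>j\<in>J \<inter> {j. j < r}. \<mu>) * (\<Prod>j\<in>J \<inter> - {j. j < r}. \<mu> * s)"
              by (rule prod.If_cases[OF fJ(1)])
            also have "\<dots> = \<mu> ^ cJ J * (\<mu> * s) ^ (t - cJ J)"
            proof -
              have e1: "J \<inter> {j. j < r} = J \<inter> {0..<r}" by auto
              have e2: "J \<inter> - {j. j < r} = J - {0..<r}" by auto
              have "card (J - {0..<r}) = t - cJ J" unfolding cJ_def using fJ
                by (metis Diff_Int2 card_Diff_subset_Int finite_Int inf.idem inf_commute)
              then show ?thesis unfolding e1 e2 by (simp add: cJ_def)
            qed
            also have "\<dots> = \<mu> ^ t * s ^ (t - cJ J)"
            proof -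
              have "cJ J \<le> t" using cJr[of J] t by simp
              then have "\<mu> ^ cJ J * \<mu> ^ (t - cJ J) = \<mu> ^ t" by (simp add: power_add[symmetric])
              then show ?thesis by (simp add: power_mult_distrib mult.assoc[symmetric])
            qed
            also have "\<dots> = s ^ (r - cJ J)"
            proof -
              have tc: "t - cJ J = (t - r) + (r - cJ J)" using cJr[of J] t by simp
              have "inverse s ^ (t - r) * s ^ (t - r) = 1" using s by (simp add: power_mult_distrib[symmetric])
              then show ?thesis unfolding mu tc power_add by (simp add: mult.assoc[symmetric])
            qed
            finally show ?thesis using True mI IJ sub by (simp add: Lambda_def \<gamma>_def D'_def)
          qed
        qed
      qed
    qed
    then show ?thesis by (metis rangeI)
  qed
  have "(xD D :: _ \<Rightarrow> 'a) \<in> Xt t m n"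
    unfolding Xt_def zariski_closure_def
  proof (intro CollectI conjI hom ballI impI)
    fix p :: "(nat set \<times> nat set \<Rightarrow> 'a) \<Rightarrow> 'a"
    assume p: "p \<in> polyfun" and van: "\<forall>y\<in>range (Lambda t m n). p y = 0"
    have coords: "\<exists>q. \<forall>s. \<gamma> s i = poly q s" for i
    proof (cases i)
      case (Pair I J)
      show ?thesis
        by (rule exI[of _ "if I = J \<and> J \<in> D' then monom 1 (r - cJ J) else 0"])
           (auto simp: Pair \<gamma>_def poly_monom)
    qed
    obtain Q where Q: "\<forall>s. p (\<gamma> s) = poly Q s" using polyfun_curve[of p \<gamma>, OF p coords] by blast
    have Q0: "Q = 0"
    proof (rule ccontr)
      assume "Q \<noteq> 0"
      then have "finite {x. poly Q x = 0}" by (rule poly_roots_finite)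
      moreover have "UNIV - {0} \<subseteq> {x. poly Q x = 0}"
      proof
        fix x :: 'a assume "x \<in> UNIV - {0}"
        then have "\<gamma> x \<in> range (Lambda t m n)" using grange by auto
        then have "p (\<gamma> x) = 0" using van by blast
        then show "x \<in> {x. poly Q x = 0}" using Q by simp
      qed
      ultimately have "finite (UNIV - {0::'a})" by (rule finite_subset[rotated])
      then show False using infinite_UNIV_char_0[where 'a='a] by simp
    qed
    show "p (xD D) = 0" using Q Q0 g0 by (metis poly_0)
  qed
  then show ?thesis unfolding D_def .
qed



lemma card_D:
  assumes "r \<le> t" "r + l \<le> m"
  shows "card {J \<in> tsubs m t. {0..<r} \<subseteq> J \<and> J \<subseteq> {0..<r+l}} = l choose (t - r)"
proof -
  let ?D = "{J \<in> tsubs m t. {0..<r} \<subseteq> J \<and> J \<subseteq> {0..<r+l}}"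
  let ?S = "{S. S \<subseteq> {r..<r+l} \<and> card S = t - r}"
  have eq: "?D = (\<lambda>S. {0..<r} \<union> S) ` ?S"
  proof
    show "?D \<subseteq> (\<lambda>S. {0..<r} \<union> S) ` ?S"
    proof
      fix J assume J: "J \<in> ?D"
      then have fJ: "finite J" "card J = t" using tsubs_card by auto
      have "card (J - {0..<r}) = t - r" using J fJ by (simp add: card_Diff_subset)
      moreover have "J - {0..<r} \<subseteq> {r..<r+l}" using J by auto
      moreover have "J = {0..<r} \<union> (J - {0..<r})" using J by auto
      ultimately show "J \<in> (\<lambda>S. {0..<r} \<union> S) ` ?S" by blast
    qed
  next
    show "(\<lambda>S. {0..<r} \<union> S) ` ?S \<subseteq> ?D"
    proof
      fix X assume "X \<in> (\<lambda>S. {0..<r} \<union> S) ` ?S"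
      then obtain S where S: "S \<subseteq> {r..<r+l}" "card S = t - r" and XS: "X = {0..<r} \<union> S" by blast
      have fS: "finite S" using S finite_subset by blast
      have "card ({0..<r} \<union> S) = card {0..<r} + card S"
        by (rule card_Un_disjoint) (use S fS in auto)
      then have "card ({0..<r} \<union> S) = r + (t - r)" using S by simp
      then have "card ({0..<r} \<union> S) = t" using assms by simp
      moreover have "{0..<r} \<union> S \<subseteq> {0..<m}" using S assms by auto
      ultimately show "X \<in> ?D" using S XS unfolding tsubs_def by auto
    qed
  qed
  have inj: "inj_on (\<lambda>S. {0..<r} \<union> S) ?S"
  proof (rule inj_onI)
    fix S S' assume a: "S \<in> ?S" "S' \<in> ?S" "{0..<r} \<union> S = {0..<r} \<union> S'"
    have "S = ({0..<r} \<union> S) - {0..<r}" "S' = ({0..<r} \<union> S') - {0..<r}" using a(1,2) by auto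
    then show "S = S'" using a(3) by simp
  qed
  have "card ?D = card ?S" unfolding eq by (rule card_image[OF inj])
  also have "\<dots> = card {r..<r+l} choose (t - r)" by (rule n_subsets) simp
  finally show ?thesis by simp
qed

theorem proposition2p2:
  fixes t m n :: nat
  assumes "1 \<le> t" "t \<le> m" "m \<le> n"
  shows "(\<exists>x::nat set \<times> nat set \<Rightarrow> 'a::{alg_closed_field, field_char_0}.
            x \<in> Xt t m n \<and> small_rank t m x = 0 \<and> rank_hom t m x = 0)
       \<and> (\<exists>x::nat set \<times> nat set \<Rightarrow> 'a.
            x \<in> Xt t m n \<and> small_rank t m x = 1 \<and> rank_hom t m x = 1)
       \<and> (\<forall>u\<in>{2..t+1}. \<forall>k\<in>{1..m-t}. \<exists>x::nat set \<times> nat set \<Rightarrow> 'a.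
            x \<in> Xt t m n \<and> small_rank t m x = u \<and> rank_hom t m x = (u + k - 1) choose (u - 1))"
proof (intro conjI ballI)
  have D0: "{J \<in> tsubs m t. {0..<0} \<subseteq> J \<and> J \<subseteq> {0..<0+0}} = {}"
    using assms by (auto simp: tsubs_def)
  have "(xD {} :: _ \<Rightarrow> 'a) \<in> Xt t m n" using closure_xD[of t 0 0 m n] assms unfolding D0 by simp
  moreover have "small_rank t m (xD {} :: _ \<Rightarrow> 'a) = 0" by (rule sr_zero)
  moreover have "rank_hom t m (xD {} :: _ \<Rightarrow> 'a) = 0" using rank_xD[of "{}" m t] by simp
  ultimately show "\<exists>x::nat set \<times> nat set \<Rightarrow> 'a. x \<in> Xt t m n \<and> small_rank t m x = 0 \<and> rank_hom t m x = 0"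
    by (intro exI[of _ "xD {} :: _ \<Rightarrow> 'a"] conjI)
next
  define D1 where "D1 = {J \<in> tsubs m t. {0..<t} \<subseteq> J \<and> J \<subseteq> {0..<t+0}}"
  have D1: "D1 = {{0..<t}}"
  proof
    show "D1 \<subseteq> {{0..<t}}" unfolding D1_def by auto
    show "{{0..<t}} \<subseteq> D1" unfolding D1_def tsubs_def using assms by auto
  qed
  have "(xD D1 :: _ \<Rightarrow> 'a) \<in> Xt t m n" using closure_xD[of t t 0 m n] assms unfolding D1_def by simp
  moreover have "small_rank t m (xD D1 :: _ \<Rightarrow> 'a) = t + 1 - t"
    by (rule sr_xD[where q=t and SS="{{0..<t}}"]) (use assms in \<open>auto simp: D1 tsubs_def\<close>)
  moreover have "rank_hom t m (xD D1 :: _ \<Rightarrow> 'a) = 1"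
    using rank_xD[of D1 m t] assms by (simp add: D1 tsubs_def)
  ultimately show "\<exists>x::nat set \<times> nat set \<Rightarrow> 'a. x \<in> Xt t m n \<and> small_rank t m x = 1 \<and> rank_hom t m x = 1"
    by (intro exI[of _ "xD D1 :: _ \<Rightarrow> 'a"] conjI) simp_all
next
  fix u k assume u: "u \<in> {2..t+1}" and k: "k \<in> {1..m-t}"
  define r where "r = t + 1 - u"
  define l where "l = u - 1 + k"
  have r: "r \<le> t" "r + l = t + k" "t + k \<le> m" "t - r = u - 1" using u k assms unfolding r_def l_def by auto
  define D where "D = {J \<in> tsubs m t. {0..<r} \<subseteq> J \<and> J \<subseteq> {0..<r+l}}"
  have Dsub: "D \<subseteq> tsubs m t" unfolding D_def by auto
  have "(xD D :: _ \<Rightarrow> 'a) \<in> Xt t m n" unfolding D_def by (rule closure_xD) (use assms r in auto)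
  moreover have "rank_hom t m (xD D :: _ \<Rightarrow> 'a) = (u + k - 1) choose (u - 1)"
  proof -
    have "card D = l choose (t - r)" unfolding D_def by (rule card_D) (use r in auto)
    moreover have "l choose (t - r) = (u + k - 1) choose (u - 1)" using r u unfolding l_def by simp
    ultimately show ?thesis using rank_xD[OF Dsub] by simp
  qed
  moreover have "small_rank t m (xD D :: _ \<Rightarrow> 'a) = t + 1 - r"
  proof (rule sr_xD[where q="t+1" and SS="(\<lambda>j. {0..<t+1} - {j}) ` {r..t}"])
    show "r \<le> t" by fact
    show "D \<subseteq> tsubs m t" by fact
    show "\<And>I. I \<in> D \<Longrightarrow> {0..<r} \<subseteq> I" unfolding D_def by auto
    show "t + 1 \<le> m" using r k by auto
    show "t + 1 \<le> t + 1" by simp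
    show "\<And>T. T \<in> (\<lambda>j. {0..<t+1} - {j}) ` {r..t} \<Longrightarrow> T \<subseteq> {0..<t+1}" by auto
    show "(\<lambda>j. {0..<t+1} - {j}) ` {r..t} \<subseteq> D"
    proof
      fix X assume "X \<in> (\<lambda>j. {0..<t+1} - {j}) ` {r..t}"
      then obtain j where j: "j \<in> {r..t}" and XS: "X = {0..<t+1} - {j}" by blast
      have "card ({0..<t+1} - {j}) = t" using j by simp
      have k1: "1 \<le> k" using k by simp
      have jr: "r \<le> j" using j by simp
      have s1: "X \<subseteq> {0..<m}" unfolding XS using r k1 by auto
      have s2: "{0..<r} \<subseteq> X" unfolding XS using jr r(1) by auto
      have s3: "X \<subseteq> {0..<r+l}" unfolding XS using r k1 by auto
      show "X \<in> D" unfolding D_def tsubs_def using s1 s2 s3 \<open>card ({0..<t+1} - {j}) = t\<close> XS by blast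
    qed
    have "inj_on (\<lambda>j. {0..<t+1} - {j}) {r..t}"
    proof (rule inj_onI)
      fix i j assume a: "i \<in> {r..t}" "j \<in> {r..t}" "{0..<t+1} - {i} = {0..<t+1} - {j}"
      show "i = j"
      proof (rule ccontr)
        assume "i \<noteq> j"
        then have "i \<in> {0..<t+1} - {j}" using a(1) by auto
        then have "i \<in> {0..<t+1} - {i}" using a(3) by (simp only:)
        then show False by simp
      qed
    qed
    then have "card ((\<lambda>j. {0..<t+1} - {j}) ` {r..t}) = card {r..t}" by (rule card_image)
    then show "card ((\<lambda>j. {0..<t+1} - {j}) ` {r..t}) = t + 1 - r" by simp
  qed
  moreover have "t + 1 - r = u" using u unfolding r_def by auto
  ultimately show "\<exists>x::nat set \<times> nat set \<Rightarrow> 'a. x \<in> Xt t m n \<and> small_rank t m x = u \<and> rank_hom t m x = (u + k - 1) choose (u - 1)"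
    by (intro exI[of _ "xD D :: _ \<Rightarrow> 'a"] conjI) simp_all
qed

end
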